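(* For any two continuous functions $P,Q\colon[0,1]\to\mathbb{R}$, the Fréchet distance equals the interleaving distance of their sublevel-set functors: $d_{\mathrm F}(P,Q)=d_I(\overleftarrow{P},\overleftarrow{Q})$.
   Context: Fréchet distance: $d_{\mathrm F}(P,Q)=\inf_\mu\max_{t\in[0,1]}|P(t)-Q(\mu(t))|$, infimum over continuous increasing bijections $\mu\colon[0,1]\to[0,1]$. $\mathbb{R}_\le$ is the poset category of real numbers (a unique morphism $y\to y'$ iff $y\le y'$). $\mathcal U$ is the category whose objects are closed subsets of $[0,1]$ (including $\emptyset$) and whose morphisms are continuous increasing functions between them. For a continuous $P\colon[0,1]\to\mathbb{R}$, the functor $\overleftarrow{P}\colon\mathbb{R}_\le\to\mathcal U$ sends $y$ to $P^{-1}((-\infty,y])$ and $y\le y'$ to the inclusion map. For a functor $F\colon\mathbb{R}_\le\to\mathcal C$ and $\delta\ge0$, the shift $F[\delta]$ is given by $F[\delta](y)=F(y+\delta)$, $F[\delta](y\le y')=F(y+\delta\le y'+\delta)$; $\eta^{F,\delta}\colon F\Rightarrow F[\delta]$ is the natural transformation with components $F(y\le y+\delta)$; for a natural transformation $\varphi\colon F\Rightarrow G$, $\varphi[\delta]\colon F[\delta]\Rightarrow G[\delta]$ has components $\varphi_{y+\delta}$. A $\delta$-interleaving between $F,G$ is a pair of natural transformations $\varphi\colon F\Rightarrow G[\delta]$, $\psi\colon G\Rightarrow F[\delta]$ with $\psi[\delta]\circ\varphi=\eta^{F,2\delta}$ and $\varphi[\delta]\circ\psi=\eta^{G,2\delta}$.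 The interleaving distance $d_I(F,G)$ is the infimum of all $\delta\ge0$ for which a $\delta$-interleaving exists. *)

theory Defs
  imports "HOL-Analysis.Analysis"
begin

definition reparam :: "(real \<Rightarrow> real) \<Rightarrow> bool" where
  "reparam \<mu> \<longleftrightarrow> continuous_on {0..1} \<mu> \<and> strict_mono_on {0..1} \<mu> \<and> bij_betw \<mu> {0..1} {0..1}"

definition frechet_dist :: "(real \<Rightarrow> real) \<Rightarrow> (real \<Rightarrow> real) \<Rightarrow> ereal" where
  "frechet_dist P Q = (INF \<mu> \<in> {\<mu>. reparam \<mu>}. SUP t \<in> {0..1}. ereal \<bar>P t - Q (\<mu> t)\<bar>)"

text \<open>A morphism A -> B is represented by a function
  real => real that maps A into B and is continuous and (weakly) increasing on A;
  two representatives denote the same morphism iff they agree on A.\<close>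

definition U_obj :: "real set \<Rightarrow> bool" where
  "U_obj A \<longleftrightarrow> closed A \<and> A \<subseteq> {0..1}"

definition U_mor :: "real set \<Rightarrow> real set \<Rightarrow> (real \<Rightarrow> real) \<Rightarrow> bool" where
  "U_mor A B f \<longleftrightarrow> U_obj A \<and> U_obj B \<and> f ` A \<subseteq> B \<and> continuous_on A f \<and> mono_on A f"

text \<open>A functor is a pair (object map, morphism map); the morphism map applied to
  y y' gives F(y \<le> y').\<close>
type_synonym functorU = "(real \<Rightarrow> real set) \<times> (real \<Rightarrow> real \<Rightarrow> real \<Rightarrow> real)"

definition is_functorU :: "functorU \<Rightarrow> bool" where
  "is_functorU F \<longleftrightarrow>
     (\<forall>y. U_obj (fst F y)) \<and>
     (\<forall>y y'. y \<le> y' \<longrightarrow> U_mor (fst F y) (fst F y') (snd F y y')) \<and>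
     (\<forall>y. \<forall>x\<in>fst F y. snd F y y x = x) \<and>
     (\<forall>y y' y''. y \<le> y' \<longrightarrow> y' \<le> y'' \<longrightarrow>
        (\<forall>x\<in>fst F y. snd F y' y'' (snd F y y' x) = snd F y y'' x))"

definition shiftU :: "functorU \<Rightarrow> real \<Rightarrow> functorU" where
  "shiftU F \<delta> = ((\<lambda>y. fst F (y + \<delta>)), (\<lambda>y y'. snd F (y + \<delta>) (y' + \<delta>)))"

definition nat_transU :: "functorU \<Rightarrow> functorU \<Rightarrow> (real \<Rightarrow> real \<Rightarrow> real) \<Rightarrow> bool" where
  "nat_transU F G \<phi> \<longleftrightarrow>
     (\<forall>y. U_mor (fst F y) (fst G y) (\<phi> y)) \<and>
     (\<forall>y y'. y \<le> y' \<longrightarrow> (\<forall>x\<in>fst F y. snd G y y' (\<phi> y x) = \<phi> y' (snd F y y' x)))"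

definition eta :: "functorU \<Rightarrow> real \<Rightarrow> (real \<Rightarrow> real \<Rightarrow> real)" where
  "eta F \<delta> = (\<lambda>y. snd F y (y + \<delta>))"

definition shift_nt :: "(real \<Rightarrow> real \<Rightarrow> real) \<Rightarrow> real \<Rightarrow> (real \<Rightarrow> real \<Rightarrow> real)" where
  "shift_nt \<phi> \<delta> = (\<lambda>y. \<phi> (y + \<delta>))"

definition comp_nt :: "(real \<Rightarrow> real \<Rightarrow> real) \<Rightarrow> (real \<Rightarrow> real \<Rightarrow> real) \<Rightarrow> (real \<Rightarrow> real \<Rightarrow> real)" where
  "comp_nt \<psi> \<phi> = (\<lambda>y. \<psi> y \<circ> \<phi> y)"

definition nt_eq :: "functorU \<Rightarrow> (real \<Rightarrow> real \<Rightarrow> real) \<Rightarrow> (real \<Rightarrow> real \<Rightarrow> real) \<Rightarrow> bool" where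
  "nt_eq F \<alpha> \<beta> \<longleftrightarrow> (\<forall>y. \<forall>x\<in>fst F y. \<alpha> y x = \<beta> y x)"

definition interleavingU :: "real \<Rightarrow> functorU \<Rightarrow> functorU \<Rightarrow> bool" where
  "interleavingU \<delta> F G \<longleftrightarrow>
     (\<exists>\<phi> \<psi>. nat_transU F (shiftU G \<delta>) \<phi> \<and> nat_transU G (shiftU F \<delta>) \<psi> \<and>
        nt_eq F (comp_nt (shift_nt \<psi> \<delta>) \<phi>) (eta F (2 * \<delta>)) \<and>
        nt_eq G (comp_nt (shift_nt \<phi> \<delta>) \<psi>) (eta G (2 * \<delta>)))"

definition interleaving_dist :: "functorU \<Rightarrow> functorU \<Rightarrow> ereal" where
  "interleaving_dist F G = (INF \<delta> \<in> {\<delta>. \<delta> \<ge> 0 \<and> interleavingU \<delta> F G}. ereal \<delta>)"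

definition sublevel :: "(real \<Rightarrow> real) \<Rightarrow> functorU" where
  "sublevel P = ((\<lambda>y. {t \<in> {0..1}. P t \<le> y}), (\<lambda>y y' x. x))"

end

theory Submission
  imports Defs
begin

lemma sublevel_obj:
  fixes P :: "real \<Rightarrow> real"
  assumes "continuous_on {0..1} P"
  shows "U_obj {t \<in> {0..1}. P t \<le> y}"
proof -
  have "{t \<in> {0..1}. P t \<le> y} = {0..1} \<inter> P -` {..y}" by auto
  moreover have "closed ({0..1::real} \<inter> P -` {..y})"
    by (rule continuous_closed_preimage[OF assms]) (auto simp: closed_atMost)
  ultimately show ?thesis unfolding U_obj_def by auto
qed

lemma bound_exists:
  fixes P :: "real \<Rightarrow> real"
  assumes "continuous_on {0..1} P"
  shows "\<exists>B. \<forall>t\<in>{0..1::real}. \<bar>P t\<bar> \<le> B"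
proof -
  have "compact (P ` {0..1})" by (rule compact_continuous_image[OF assms]) auto
  then have "bounded (P ` {0..1})" by (rule compact_imp_bounded)
  then show ?thesis unfolding bounded_iff by auto
qed

lemma inter_imp:
  assumes cP: "continuous_on {0..1} P" and cQ: "continuous_on {0..1} Q"
    and d: "\<delta> \<ge> 0" and I: "interleavingU \<delta> (sublevel P) (sublevel Q)"
  shows "\<exists>\<mu>. reparam \<mu> \<and> (\<forall>t\<in>{0..1}. \<bar>P t - Q (\<mu> t)\<bar> \<le> \<delta>)"
proof -
  obtain \<phi> \<psi> where
    n1: "nat_transU (sublevel P) (shiftU (sublevel Q) \<delta>) \<phi>" and
    n2: "nat_transU (sublevel Q) (shiftU (sublevel P) \<delta>) \<psi>" and
    e1: "nt_eq (sublevel P) (comp_nt (shift_nt \<psi> \<delta>) \<phi>) (eta (sublevel P) (2 * \<delta>))" and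
    e2: "nt_eq (sublevel Q) (comp_nt (shift_nt \<phi> \<delta>) \<psi>) (eta (sublevel Q) (2 * \<delta>))"
    using I unfolding interleavingU_def by blast
  obtain B1 where B1: "\<forall>t\<in>{0..1::real}. \<bar>P t\<bar> \<le> B1" using bound_exists[OF cP] by blast
  obtain B2 where B2: "\<forall>t\<in>{0..1::real}. \<bar>Q t\<bar> \<le> B2" using bound_exists[OF cQ] by blast
  define Y where "Y = max B1 B2"
  have SP: "\<And>y. y \<ge> Y \<Longrightarrow> {t \<in> {0..1}. P t \<le> y} = {0..1}"
    using B1 unfolding Y_def by force
  have SQ: "\<And>y. y \<ge> Y \<Longrightarrow> {t \<in> {0..1}. Q t \<le> y} = {0..1}"
    using B2 unfolding Y_def by force
  have nat1: "\<And>y y' x. y \<le> y' \<Longrightarrow> x \<in> {0..1} \<Longrightarrow> P x \<le> y \<Longrightarrow> \<phi> y x = \<phi> y' x"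
    using n1 unfolding nat_transU_def sublevel_def shiftU_def by auto
  have nat2: "\<And>y y' x. y \<le> y' \<Longrightarrow> x \<in> {0..1} \<Longrightarrow> Q x \<le> y \<Longrightarrow> \<psi> y x = \<psi> y' x"
    using n2 unfolding nat_transU_def sublevel_def shiftU_def by auto
  have m1: "\<And>y. U_mor {t \<in> {0..1}. P t \<le> y} {t \<in> {0..1}. Q t \<le> y + \<delta>} (\<phi> y)"
    using n1 unfolding nat_transU_def sublevel_def shiftU_def by auto
  have m2: "\<And>y. U_mor {t \<in> {0..1}. Q t \<le> y} {t \<in> {0..1}. P t \<le> y + \<delta>} (\<psi> y)"
    using n2 unfolding nat_transU_def sublevel_def shiftU_def by auto
  have i1: "\<And>y x. x \<in> {0..1} \<Longrightarrow> P x \<le> y \<Longrightarrow> \<psi> (y + \<delta>) (\<phi> y x) = x"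
    using e1 unfolding nt_eq_def comp_nt_def shift_nt_def eta_def sublevel_def by auto
  have i2: "\<And>y x. x \<in> {0..1} \<Longrightarrow> Q x \<le> y \<Longrightarrow> \<phi> (y + \<delta>) (\<psi> y x) = x"
    using e2 unfolding nt_eq_def comp_nt_def shift_nt_def eta_def sublevel_def by auto
  define \<mu> where "\<mu> = \<phi> Y"
  define \<nu> where "\<nu> = \<psi> Y"
  have mY: "U_mor {0..1} {0..1} \<mu>"
    using m1[of Y] SP[of Y] SQ[of "Y+\<delta>"] d unfolding \<mu>_def by auto
  have nY: "U_mor {0..1} {0..1} \<nu>"
    using m2[of Y] SQ[of Y] SP[of "Y+\<delta>"] d unfolding \<nu>_def by auto
  have PY: "\<And>x. x \<in> {0..1} \<Longrightarrow> P x \<le> Y" using B1 unfolding Y_def by force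
  have QY: "\<And>x. x \<in> {0..1} \<Longrightarrow> Q x \<le> Y" using B2 unfolding Y_def by force
  have mi: "\<mu> ` {0..1} \<subseteq> {0..1}" and ni: "\<nu> ` {0..1} \<subseteq> {0..1}"
    using mY nY unfolding U_mor_def by blast+
  have inv1: "\<And>x. x \<in> {0..1} \<Longrightarrow> \<nu> (\<mu> x) = x"
  proof -
    fix x :: real assume x: "x \<in> {0..1}"
    have "\<mu> x \<in> {0..1}" using mi x by blast
    then have "\<nu> (\<mu> x) = \<psi> (Y + \<delta>) (\<mu> x)" unfolding \<nu>_def
      using nat2[of Y "Y+\<delta>" "\<mu> x"] QY d by auto
    also have "\<dots> = x" unfolding \<mu>_def using i1[OF x PY[OF x]] .
    finally show "\<nu> (\<mu> x) = x" .
  qed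
  have inv2: "\<And>x. x \<in> {0..1} \<Longrightarrow> \<mu> (\<nu> x) = x"
  proof -
    fix x :: real assume x: "x \<in> {0..1}"
    have "\<nu> x \<in> {0..1}" using ni x by blast
    then have "\<mu> (\<nu> x) = \<phi> (Y + \<delta>) (\<nu> x)" unfolding \<mu>_def
      using nat1[of Y "Y+\<delta>" "\<nu> x"] PY d by auto
    also have "\<dots> = x" unfolding \<nu>_def using i2[OF x QY[OF x]] .
    finally show "\<mu> (\<nu> x) = x" .
  qed
  have injm: "inj_on \<mu> {0..1}" by (metis inj_onI inv1)
  have monom: "mono_on {0..1} \<mu>" using mY unfolding U_mor_def by auto
  have smono: "strict_mono_on {0..1} \<mu>"
  proof (rule strict_mono_onI)
    fix r s :: real assume r: "r \<in> {0..1}" and s: "s \<in> {0..1}" and rs: "r < s"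
    have "\<mu> r \<le> \<mu> s" using monom r s rs unfolding mono_on_def by auto
    moreover have "\<mu> r \<noteq> \<mu> s" using inj_onD[OF injm _ r s] rs by auto
    ultimately show "\<mu> r < \<mu> s" by auto
  qed
  have surj: "\<mu> ` {0..1} = {0..1}"
  proof
    show "\<mu> ` {0..1} \<subseteq> {0..1}" by (rule mi)
    show "{0..1} \<subseteq> \<mu> ` {0..1}"
    proof
      fix x :: real assume x: "x \<in> {0..1}"
      then have "x = \<mu> (\<nu> x)" using inv2 by auto
      moreover have "\<nu> x \<in> {0..1}" using ni x by blast
      ultimately show "x \<in> \<mu> ` {0..1}" by blast
    qed
  qed
  have rep: "reparam \<mu>" unfolding reparam_def
    using mY smono injm surj unfolding U_mor_def bij_betw_def by auto
  have bnd: "\<forall>t\<in>{0..1}. \<bar>P t - Q (\<mu> t)\<bar> \<le> \<delta>"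
  proof
    fix t :: real assume t: "t \<in> {0..1}"
    have a: "\<phi> (P t) t = \<mu> t" unfolding \<mu>_def using nat1[of "P t" Y t] t PY[OF t] by auto
    have "\<phi> (P t) t \<in> {s \<in> {0..1}. Q s \<le> P t + \<delta>}" using m1[of "P t"] t unfolding U_mor_def by auto
    then have q1: "Q (\<mu> t) \<le> P t + \<delta>" using a by auto
    have mt: "\<mu> t \<in> {0..1}" using mi t by blast
    have b: "\<psi> (Q (\<mu> t)) (\<mu> t) = \<nu> (\<mu> t)" unfolding \<nu>_def using nat2[of "Q (\<mu> t)" Y "\<mu> t"] mt QY[OF mt] by auto
    have "\<psi> (Q (\<mu> t)) (\<mu> t) \<in> {s \<in> {0..1}. P s \<le> Q (\<mu> t) + \<delta>}" using m2[of "Q (\<mu> t)"] mt unfolding U_mor_def by auto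
    then have q2: "P t \<le> Q (\<mu> t) + \<delta>" using b inv1[OF t] by auto
    show "\<bar>P t - Q (\<mu> t)\<bar> \<le> \<delta>" using q1 q2 by auto
  qed
  show ?thesis using rep bnd by blast
qed

lemma imp_inter:
  assumes cP: "continuous_on {0..1} P" and cQ: "continuous_on {0..1} Q"
    and rep: "reparam \<mu>" and bnd: "\<forall>t\<in>{0..1}. \<bar>P t - Q (\<mu> t)\<bar> \<le> d"
  shows "interleavingU d (sublevel P) (sublevel Q)"
proof -
  have cm: "continuous_on {0..1} \<mu>" and sm: "strict_mono_on {0..1} \<mu>"
    and bj: "bij_betw \<mu> {0..1} {0..1}" using rep unfolding reparam_def by auto
  define \<nu> where "\<nu> = inv_into {0..1} \<mu>"
  have im: "\<mu> ` {0..1} = {0..1}" using bj unfolding bij_betw_def by auto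
  have injm: "inj_on \<mu> {0..1}" using bj unfolding bij_betw_def by auto
  have inv1: "\<And>x. x \<in> {0..1} \<Longrightarrow> \<nu> (\<mu> x) = x" unfolding \<nu>_def using injm by auto
  have inv2: "\<And>x. x \<in> {0..1} \<Longrightarrow> \<mu> (\<nu> x) = x" unfolding \<nu>_def using im
    by (simp add: f_inv_into_f)
  have ni: "\<And>x. x \<in> {0..1} \<Longrightarrow> \<nu> x \<in> {0..1}" unfolding \<nu>_def using im
    by (metis inv_into_into)
  have cn: "continuous_on {0..1} \<nu>"
    using continuous_on_inv[OF cm compact_Icc, of \<nu>] inv1 im by auto
  have mono_m: "mono_on {0..1} \<mu>" using sm
    by (metis mono_onI order_le_less strict_mono_onD)
  have mono_n: "mono_on {0..1} \<nu>"
  proof (rule mono_onI)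
    fix r s :: real assume r: "r \<in> {0..1}" and s: "s \<in> {0..1}" and rs: "r \<le> s"
    show "\<nu> r \<le> \<nu> s"
    proof (rule ccontr)
      assume "\<not> \<nu> r \<le> \<nu> s"
      then have "\<nu> s < \<nu> r" by auto
      then have "\<mu> (\<nu> s) < \<mu> (\<nu> r)" using sm ni[OF r] ni[OF s] by (metis strict_mono_onD)
      then show False using inv2[OF r] inv2[OF s] rs by auto
    qed
  qed
  have U1: "\<And>y. U_mor {t \<in> {0..1}. P t \<le> y} {t \<in> {0..1}. Q t \<le> y + d} \<mu>"
  proof -
    fix y
    show "U_mor {t \<in> {0..1}. P t \<le> y} {t \<in> {0..1}. Q t \<le> y + d} \<mu>"
      unfolding U_mor_def
    proof (intro conjI)
      show "U_obj {t \<in> {0..1}. P t \<le> y}" by (rule sublevel_obj[OF cP])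
      show "U_obj {t \<in> {0..1}. Q t \<le> y + d}" by (rule sublevel_obj[OF cQ])
      show "\<mu> ` {t \<in> {0..1}. P t \<le> y} \<subseteq> {t \<in> {0..1}. Q t \<le> y + d}"
        using im bnd by force
      show "continuous_on {t \<in> {0..1}. P t \<le> y} \<mu>" by (rule continuous_on_subset[OF cm]) auto
      show "mono_on {t \<in> {0..1}. P t \<le> y} \<mu>" by (rule mono_on_subset[OF mono_m]) auto
    qed
  qed
  have U2: "\<And>y. U_mor {t \<in> {0..1}. Q t \<le> y} {t \<in> {0..1}. P t \<le> y + d} \<nu>"
  proof -
    fix y
    show "U_mor {t \<in> {0..1}. Q t \<le> y} {t \<in> {0..1}. P t \<le> y + d} \<nu>"
      unfolding U_mor_def
    proof (intro conjI)
      show "U_obj {t \<in> {0..1}. Q t \<le> y}" by (rule sublevel_obj[OF cQ])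
      show "U_obj {t \<in> {0..1}. P t \<le> y + d}" by (rule sublevel_obj[OF cP])
      show "\<nu> ` {t \<in> {0..1}. Q t \<le> y} \<subseteq> {t \<in> {0..1}. P t \<le> y + d}"
      proof
        fix x assume "x \<in> \<nu> ` {t \<in> {0..1}. Q t \<le> y}"
        then obtain s where s: "s \<in> {0..1}" "Q s \<le> y" and x: "x = \<nu> s" by auto
        have "\<bar>P (\<nu> s) - Q (\<mu> (\<nu> s))\<bar> \<le> d" using bnd ni[OF s(1)] by auto
        then show "x \<in> {t \<in> {0..1}. P t \<le> y + d}" using inv2[OF s(1)] s ni[OF s(1)] x by auto
      qed
      show "continuous_on {t \<in> {0..1}. Q t \<le> y} \<nu>" by (rule continuous_on_subset[OF cn]) auto
      show "mono_on {t \<in> {0..1}. Q t \<le> y} \<nu>" by (rule mono_on_subset[OF mono_n]) auto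
    qed
  qed
  show ?thesis unfolding interleavingU_def
    apply (rule exI[of _ "\<lambda>y. \<mu>"], rule exI[of _ "\<lambda>y. \<nu>"])
    using U1 U2 inv1 inv2
    unfolding nat_transU_def sublevel_def shiftU_def nt_eq_def comp_nt_def shift_nt_def eta_def
    by auto
qed

theorem theorem36:
  fixes P Q :: "real \<Rightarrow> real"
  assumes "continuous_on {0..1} P" and "continuous_on {0..1} Q"
  shows "frechet_dist P Q = interleaving_dist (sublevel P) (sublevel Q)"
proof (rule antisym)
  show "frechet_dist P Q \<le> interleaving_dist (sublevel P) (sublevel Q)"
    unfolding interleaving_dist_def
  proof (rule INF_greatest)
    fix \<delta> assume "\<delta> \<in> {\<delta>. \<delta> \<ge> 0 \<and> interleavingU \<delta> (sublevel P) (sublevel Q)}"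
    then obtain \<mu> where r: "reparam \<mu>" and b: "\<forall>t\<in>{0..1}. \<bar>P t - Q (\<mu> t)\<bar> \<le> \<delta>"
      using inter_imp[OF assms] by blast
    have "frechet_dist P Q \<le> (SUP t \<in> {0..1}. ereal \<bar>P t - Q (\<mu> t)\<bar>)"
      unfolding frechet_dist_def using r by (intro INF_lower) auto
    also have "\<dots> \<le> ereal \<delta>" using b by (intro SUP_least) auto
    finally show "frechet_dist P Q \<le> ereal \<delta>" .
  qed
  show "interleaving_dist (sublevel P) (sublevel Q) \<le> frechet_dist P Q"
    unfolding frechet_dist_def
  proof (rule INF_greatest)
    fix \<mu> assume r: "\<mu> \<in> {\<mu>. reparam \<mu>}"
    define S where "S = (SUP t \<in> {0..1}. ereal \<bar>P t - Q (\<mu> t)\<bar>)"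
    show "interleaving_dist (sublevel P) (sublevel Q) \<le> S"
    proof (cases S)
      case (real d)
      have b: "\<forall>t\<in>{0..1}. \<bar>P t - Q (\<mu> t)\<bar> \<le> d"
      proof
        fix t :: real assume "t \<in> {0..1}"
        then have "ereal \<bar>P t - Q (\<mu> t)\<bar> \<le> S" unfolding S_def by (rule SUP_upper)
        then show "\<bar>P t - Q (\<mu> t)\<bar> \<le> d" using real by auto
      qed
      have d0: "d \<ge> 0" using b[rule_format, of 0] by auto
      have "interleavingU d (sublevel P) (sublevel Q)"
        using imp_inter[OF assms _ b] r by auto
      then have "interleaving_dist (sublevel P) (sublevel Q) \<le> ereal d"
        unfolding interleaving_dist_def using d0 by (intro INF_lower) auto
      then show ?thesis using real by auto
    next
      case PInf then show ?thesis by auto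
    next
      case MInf
      have "ereal \<bar>P 0 - Q (\<mu> 0)\<bar> \<le> S" unfolding S_def by (rule SUP_upper) auto
      then show ?thesis using MInf by auto
    qed
  qed
qed

end
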